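(* Let $\Gamma$ be a labeled graph. For a vertex $p$ of $\Gamma$, let $\Gamma-p$ be the labeled graph obtained by deleting $p$ and all edges incident to $p$ (the remaining vertices relabeled preserving their order). Then $$c_\Gamma=\sum_{p\text{ vertex of }\Gamma}(-1)^{\#\{\text{edges starting at }p\}}\,c_{\Gamma-p}.$$
   Context: A labeled graph with $V$ vertices and $E$ edges is a map $s:\{1,\ldots,E\}\to\mathcal{P}_2\{1,\ldots,V\}$. Each edge with $s(e)=\{i,j\}$, $i<j$, is oriented $i\to j$ (it starts at $i$). Define $c_\Gamma:=\sum_{\sigma\in S_V}\prod_{e:\,i\to j}\operatorname{sign}(\sigma(j)-\sigma(i))$; for the graph with one vertex and no edges, $c=1$. *)

theory Defs
  imports Main "HOL-Combinatorics.Permutations"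
begin

text \<open>A labeled graph with V vertices and E edges: a map s from edge labels {1..E}
  to 2-element subsets of {1..V}.  An edge with s e = {i,j}, i<j, is oriented i -> j.\<close>

definition labeled_graph :: "nat \<Rightarrow> nat \<Rightarrow> (nat \<Rightarrow> nat set) \<Rightarrow> bool" where
  "labeled_graph V E s \<longleftrightarrow> (\<forall>e\<in>{1..E}. s e \<subseteq> {1..V} \<and> card (s e) = 2)"

definition edge_src :: "nat set \<Rightarrow> nat" where
  "edge_src A = Min A"

definition edge_tgt :: "nat set \<Rightarrow> nat" where
  "edge_tgt A = Max A"

definition c_graph :: "nat \<Rightarrow> nat \<Rightarrow> (nat \<Rightarrow> nat set) \<Rightarrow> int" where
  "c_graph V E s =
     (\<Sum>\<sigma> \<in> {\<sigma>. \<sigma> permutes {1..V}}.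
        \<Prod>e\<in>{1..E}. sgn (int (\<sigma> (edge_tgt (s e))) - int (\<sigma> (edge_src (s e)))))"

definition out_deg :: "nat \<Rightarrow> (nat \<Rightarrow> nat set) \<Rightarrow> nat \<Rightarrow> nat" where
  "out_deg E s p = card {e\<in>{1..E}. p \<in> s e \<and> edge_src (s e) = p}"

text \<open>Deleting vertex p: remaining vertices relabeled order-preservingly,
  remaining edges (those not incident to p) relabeled order-preservingly.\<close>
definition vshift :: "nat \<Rightarrow> nat \<Rightarrow> nat" where
  "vshift p q = (if q < p then q else q - 1)"

definition kept_edges :: "nat \<Rightarrow> (nat \<Rightarrow> nat set) \<Rightarrow> nat \<Rightarrow> nat set" where
  "kept_edges E s p = {e\<in>{1..E}. p \<notin> s e}"

definition del_E :: "nat \<Rightarrow> (nat \<Rightarrow> nat set) \<Rightarrow> nat \<Rightarrow> nat" where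
  "del_E E s p = card (kept_edges E s p)"

definition del_s :: "nat \<Rightarrow> (nat \<Rightarrow> nat set) \<Rightarrow> nat \<Rightarrow> nat \<Rightarrow> nat set" where
  "del_s E s p k = vshift p ` s (sorted_list_of_set (kept_edges E s p) ! (k - 1))"

end

theory Submission
  imports Defs
begin

definition ush :: "nat \<Rightarrow> nat \<Rightarrow> nat" where
  "ush p q = (if q < p then q else Suc q)"

lemma mono_vshift: "mono (vshift p)"
  by (auto simp: mono_def vshift_def)

lemma reindex_kept:
  fixes h :: "nat \<Rightarrow> int"
  shows "(\<Prod>k\<in>{1..del_E E s p}. h (sorted_list_of_set (kept_edges E s p) ! (k - 1)))
         = (\<Prod>e\<in>kept_edges E s p. h e)"
proof -
  let ?K = "kept_edges E s p"
  let ?xs = "sorted_list_of_set ?K"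
  have fin: "finite ?K" by (simp add: kept_edges_def)
  have len: "length ?xs = del_E E s p" using fin by (simp add: del_E_def)
  have "(\<Prod>k\<in>{1..del_E E s p}. h (?xs ! (k - 1))) = (\<Prod>k<length ?xs. h (?xs ! k))"
    using prod.atLeast1_atMost_eq[of "\<lambda>k. h (?xs ! (k - 1))" "del_E E s p"] len by simp
  also have "\<dots> = prod_list (map h ?xs)"
    by (simp add: prod.list_conv_set_nth atLeast0LessThan)
  also have "\<dots> = (\<Prod>e\<in>?K. h e)"
    using fin prod.distinct_set_conv_list[of ?xs h] by simp
  finally show ?thesis .
qed

lemma card2_minmax:
  assumes "card A = 2"
  shows "Min A \<in> A \<and> Max A \<in> A \<and> (\<forall>x\<in>A. x = Min A \<or> x = Max A) \<and> Min A < (Max A :: nat)"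
proof -
  from assms obtain x y where xy: "A = {x,y}" "x \<noteq> y" unfolding card_2_iff by blast
  show ?thesis
  proof (cases "x < y")
    case True
    then have "Min A = x" "Max A = y" using xy by auto
    then show ?thesis using xy True by auto
  next
    case False
    then have "Min A = y" "Max A = x" using xy by auto
    then show ?thesis using xy False by auto
  qed
qed


definition tau_of :: "nat \<Rightarrow> nat \<Rightarrow> (nat \<Rightarrow> nat) \<Rightarrow> nat \<Rightarrow> nat" where
  "tau_of p V \<sigma> = (\<lambda>q. if q \<in> {1..V-1} then \<sigma> (ush p q) else q)"

definition sig_of :: "nat \<Rightarrow> nat \<Rightarrow> (nat \<Rightarrow> nat) \<Rightarrow> nat \<Rightarrow> nat" where
  "sig_of p V \<tau> = (\<lambda>q. if q = p then V else if q \<in> {1..V} then \<tau> (vshift p q) else q)"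

lemma ush_vshift: "q \<noteq> p \<Longrightarrow> ush p (vshift p q) = q"
  by (auto simp: ush_def vshift_def)

lemma vshift_ush: "vshift p (ush p q) = q"
  by (auto simp: ush_def vshift_def)

lemma vshift_range: "q \<in> {1..V} \<Longrightarrow> p \<in> {1..V} \<Longrightarrow> q \<noteq> p \<Longrightarrow> vshift p q \<in> {1..V-1}"
  by (auto simp: vshift_def)

lemma ush_range: "q \<in> {1..V-1} \<Longrightarrow> p \<in> {1..V} \<Longrightarrow> ush p q \<in> {1..V} \<and> ush p q \<noteq> p"
  by (auto simp: ush_def)

lemma prod_split:
  assumes lg: "labeled_graph V E s" and p: "p \<in> {1..V}"
    and sp: "\<sigma> permutes {1..V}" and sv: "\<sigma> p = V"
  shows "(\<Prod>e\<in>{1..E}. sgn (int (\<sigma> (edge_tgt (s e))) - int (\<sigma> (edge_src (s e))))) =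
    (-1) ^ out_deg E s p * (\<Prod>k\<in>{1..del_E E s p}.
       sgn (int (tau_of p V \<sigma> (edge_tgt (del_s E s p k))) - int (tau_of p V \<sigma> (edge_src (del_s E s p k)))))"
proof -
  let ?g = "\<lambda>e. sgn (int (\<sigma> (edge_tgt (s e))) - int (\<sigma> (edge_src (s e))))"
  let ?K = "kept_edges E s p"
  let ?I = "{e\<in>{1..E}. p \<in> s e}"
  have inj: "inj_on \<sigma> {1..V}" using permutes_inj_on[OF sp] .
  have img: "\<sigma> x \<in> {1..V}" if "x \<in> {1..V}" for x using permutes_in_image[OF sp] that by simp
  have edge: "s e \<subseteq> {1..V} \<and> Min (s e) \<in> s e \<and> Max (s e) \<in> s e \<and> (\<forall>x\<in>s e. x = Min (s e) \<or> x = Max (s e)) \<and> Min (s e) < Max (s e)" if "e \<in> {1..E}" for e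
  proof -
    have "s e \<subseteq> {1..V}" "card (s e) = 2" using lg that unfolding labeled_graph_def by auto
    then show ?thesis using card2_minmax[of "s e"] by simp
  qed
  have split: "{1..E} = ?I \<union> ?K" "?I \<inter> ?K = {}" by (auto simp: kept_edges_def)
  have "(\<Prod>e\<in>{1..E}. ?g e) = (\<Prod>e\<in>?I. ?g e) * (\<Prod>e\<in>?K. ?g e)"
    by (subst split(1), rule prod.union_disjoint) (auto simp: kept_edges_def)
  also have "(\<Prod>e\<in>?I. ?g e) = (\<Prod>e\<in>?I. if Min (s e) = p then -1 else 1)"
  proof (rule prod.cong[OF refl])
    fix e assume e: "e \<in> ?I"
    then have E: "s e \<subseteq> {1..V}" "Min (s e) \<in> s e \<and> Max (s e) \<in> s e \<and> (\<forall>x\<in>s e. x = Min (s e) \<or> x = Max (s e))" "Min (s e) < Max (s e)" "p \<in> s e"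
      using edge by auto
    have mi: "Min (s e) \<in> {1..V}" "Max (s e) \<in> {1..V}" using E by auto
    show "?g e = (if Min (s e) = p then -1 else 1)"
    proof (cases "Min (s e) = p")
      case True
      then have "Max (s e) \<noteq> p" using E by auto
      then have "\<sigma> (Max (s e)) \<noteq> V" using inj_onD[OF inj, of "Max (s e)" p] mi p sv by auto
      then have "\<sigma> (Max (s e)) < V" using img mi by fastforce
      then show ?thesis using True sv by (simp add: edge_tgt_def edge_src_def sgn_if)
    next
      case False
      then have T: "Max (s e) = p" using E by fastforce
      then have "\<sigma> (Min (s e)) \<noteq> V" using inj_onD[OF inj, of "Min (s e)" p] mi p sv False by auto
      then have "\<sigma> (Min (s e)) < V" using img mi by fastforce
      then show ?thesis using T False sv by (simp add: edge_tgt_def edge_src_def sgn_if)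
    qed
  qed
  also have "\<dots> = (-1) ^ out_deg E s p"
  proof -
    have "(\<Prod>e\<in>?I. if Min (s e) = p then -1 else (1::int)) =
      (\<Prod>e\<in>?I \<inter> {e. Min (s e) = p}. -1) * (\<Prod>e\<in>?I \<inter> - {e. Min (s e) = p}. 1)"
      by (rule prod.If_cases) simp
    also have "\<dots> = (-1) ^ card (?I \<inter> {e. Min (s e) = p})" by simp
    also have "?I \<inter> {e. Min (s e) = p} = {e\<in>{1..E}. p \<in> s e \<and> edge_src (s e) = p}"
      by (auto simp: edge_src_def)
    finally show ?thesis by (simp add: out_deg_def)
  qed
  also have "(\<Prod>e\<in>?K. ?g e) = (\<Prod>k\<in>{1..del_E E s p}.
       sgn (int (tau_of p V \<sigma> (edge_tgt (del_s E s p k))) - int (tau_of p V \<sigma> (edge_src (del_s E s p k)))))"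
  proof -
    let ?h = "\<lambda>e. sgn (int (tau_of p V \<sigma> (Max (vshift p ` s e))) - int (tau_of p V \<sigma> (Min (vshift p ` s e))))"
    have "(\<Prod>k\<in>{1..del_E E s p}.
       sgn (int (tau_of p V \<sigma> (edge_tgt (del_s E s p k))) - int (tau_of p V \<sigma> (edge_src (del_s E s p k)))))
       = (\<Prod>k\<in>{1..del_E E s p}. ?h (sorted_list_of_set ?K ! (k - 1)))"
      by (simp add: del_s_def edge_tgt_def edge_src_def)
    also have "\<dots> = (\<Prod>e\<in>?K. ?h e)" by (rule reindex_kept)
    also have "\<dots> = (\<Prod>e\<in>?K. ?g e)"
    proof (rule prod.cong[OF refl])
      fix e assume e: "e \<in> ?K"
      then have E: "s e \<subseteq> {1..V}" "Min (s e) \<in> s e \<and> Max (s e) \<in> s e \<and> (\<forall>x\<in>s e. x = Min (s e) \<or> x = Max (s e))" "Min (s e) < Max (s e)" "p \<notin> s e"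
        using edge by (auto simp: kept_edges_def)
      have fin: "finite (s e)" "s e \<noteq> {}" using E by (auto intro: finite_subset)
      have mi: "Min (s e) \<in> {1..V}" "Max (s e) \<in> {1..V}" "Min (s e) \<noteq> p" "Max (s e) \<noteq> p"
        using E by auto
      have a: "Max (vshift p ` s e) = vshift p (Max (s e))"
        using mono_Max_commute[OF mono_vshift fin] by simp
      have b: "Min (vshift p ` s e) = vshift p (Min (s e))"
        using mono_Min_commute[OF mono_vshift fin] by simp
      have t: "tau_of p V \<sigma> (vshift p x) = \<sigma> x" if "x \<in> {1..V}" "x \<noteq> p" for x
        using vshift_range[OF that(1) p that(2)] ush_vshift[OF that(2)] by (simp add: tau_of_def)
      show "?h e = ?g e" using a b t mi by (simp add: edge_tgt_def edge_src_def)
    qed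
    finally show ?thesis by simp
  qed
  finally show ?thesis .
qed

lemma tau_perm:
  assumes p: "p \<in> {1..V}" and sp: "\<sigma> permutes {1..V}" and sv: "\<sigma> p = V"
  shows "tau_of p V \<sigma> permutes {1..V-1}"
proof (rule bij_imp_permutes)
  have inj: "inj_on \<sigma> {1..V}" using permutes_inj_on[OF sp] .
  have img: "\<sigma> x \<in> {1..V}" if "x \<in> {1..V}" for x using permutes_in_image[OF sp] that by simp
  show "tau_of p V \<sigma> x = x" if "x \<notin> {1..V-1}" for x unfolding tau_of_def using that by auto
  show "bij_betw (tau_of p V \<sigma>) {1..V-1} {1..V-1}"
    unfolding bij_betw_def
  proof
    show "inj_on (tau_of p V \<sigma>) {1..V - 1}"
    proof (rule inj_onI)
      fix x y assume x: "x \<in> {1..V-1}" and y: "y \<in> {1..V-1}" and eq: "tau_of p V \<sigma> x = tau_of p V \<sigma> y"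
      then have "\<sigma> (ush p x) = \<sigma> (ush p y)" by (simp add: tau_of_def)
      then have "ush p x = ush p y" using inj_onD[OF inj] ush_range[OF x p] ush_range[OF y p] by blast
      then show "x = y" using vshift_ush by metis
    qed
    show "tau_of p V \<sigma> ` {1..V - 1} = {1..V - 1}"
    proof
      show "tau_of p V \<sigma> ` {1..V - 1} \<subseteq> {1..V - 1}"
      proof
        fix y assume "y \<in> tau_of p V \<sigma> ` {1..V - 1}"
        then obtain x where x: "x \<in> {1..V-1}" "y = \<sigma> (ush p x)" by (auto simp: tau_of_def)
        have "\<sigma> (ush p x) \<noteq> \<sigma> p" using inj_onD[OF inj, of "ush p x" p] ush_range[OF x(1) p] p by auto
        then show "y \<in> {1..V-1}" using img[of "ush p x"] ush_range[OF x(1) p] x(2) sv by auto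
      qed
      show "{1..V - 1} \<subseteq> tau_of p V \<sigma> ` {1..V - 1}"
      proof
        fix y assume y: "y \<in> {1..V-1}"
        then have "y \<in> {1..V}" by auto
        then obtain x where x: "x \<in> {1..V}" "\<sigma> x = y"
          using permutes_image[OF sp] by (metis imageE)
        have "x \<noteq> p" using x sv y by auto
        then have "vshift p x \<in> {1..V-1}" "tau_of p V \<sigma> (vshift p x) = y"
          using vshift_range[OF x(1) p] ush_vshift x by (auto simp: tau_of_def)
        then show "y \<in> tau_of p V \<sigma> ` {1..V - 1}" by (metis imageI)
      qed
    qed
  qed
qed

lemma sig_perm:
  assumes p: "p \<in> {1..V}" and tp: "\<tau> permutes {1..V-1}"
  shows "sig_of p V \<tau> permutes {1..V}" "sig_of p V \<tau> p = V"
proof -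
  show "sig_of p V \<tau> p = V" by (simp add: sig_of_def)
  have inj: "inj_on \<tau> {1..V-1}" using permutes_inj_on[OF tp] .
  have img: "\<tau> x \<in> {1..V-1}" if "x \<in> {1..V-1}" for x using permutes_in_image[OF tp] that by simp
  show "sig_of p V \<tau> permutes {1..V}"
  proof (rule bij_imp_permutes)
    show "sig_of p V \<tau> x = x" if "x \<notin> {1..V}" for x using that p by (auto simp: sig_of_def)
    show "bij_betw (sig_of p V \<tau>) {1..V} {1..V}"
      unfolding bij_betw_def
    proof
      show "inj_on (sig_of p V \<tau>) {1..V}"
      proof (rule inj_onI)
        fix x y assume x: "x \<in> {1..V}" and y: "y \<in> {1..V}" and eq: "sig_of p V \<tau> x = sig_of p V \<tau> y"
        show "x = y"
        proof (cases "x = p \<or> y = p")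
          case True
          then show ?thesis
          proof
            assume xp: "x = p"
            show ?thesis
            proof (rule ccontr)
              assume "x \<noteq> y"
              then have "y \<noteq> p" using xp by simp
              then have "\<tau> (vshift p y) \<in> {1..V-1}" using img vshift_range[OF y p] by blast
              moreover have "\<tau> (vshift p y) = V" using eq xp \<open>y \<noteq> p\<close> y by (simp add: sig_of_def)
              ultimately show False using p by auto
            qed
          next
            assume yp: "y = p"
            show ?thesis
            proof (rule ccontr)
              assume "x \<noteq> y"
              then have "x \<noteq> p" using yp by simp
              then have "\<tau> (vshift p x) \<in> {1..V-1}" using img vshift_range[OF x p] by blast
              moreover have "\<tau> (vshift p x) = V" using eq yp \<open>x \<noteq> p\<close> x by (simp add: sig_of_def)
              ultimately show False using p by auto
            qed
          qed
        next
          case False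
          then have "\<tau> (vshift p x) = \<tau> (vshift p y)" using eq x y by (simp add: sig_of_def)
          then have "vshift p x = vshift p y"
            using inj_onD[OF inj] vshift_range[OF x p] vshift_range[OF y p] False by blast
          then show "x = y" using ush_vshift False by metis
        qed
      qed
      show "sig_of p V \<tau> ` {1..V} = {1..V}"
      proof
        show "sig_of p V \<tau> ` {1..V} \<subseteq> {1..V}"
        proof
          fix y assume "y \<in> sig_of p V \<tau> ` {1..V}"
          then obtain x where x: "x \<in> {1..V}" "y = sig_of p V \<tau> x" by auto
          show "y \<in> {1..V}"
          proof (cases "x = p")
            case True then show ?thesis using x p by (simp add: sig_of_def)
          next
            case False
            then have "\<tau> (vshift p x) \<in> {1..V-1}" using img vshift_range[OF x(1) p] by blast
            then show ?thesis using x False by (auto simp: sig_of_def)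
          qed
        qed
        show "{1..V} \<subseteq> sig_of p V \<tau> ` {1..V}"
        proof
          fix y assume y: "y \<in> {1..V}"
          show "y \<in> sig_of p V \<tau> ` {1..V}"
          proof (cases "y = V")
            case True
            then have "sig_of p V \<tau> p = y" by (simp add: sig_of_def)
            then show ?thesis using p by (metis imageI)
          next
            case False
            then have "y \<in> {1..V-1}" using y by auto
            then obtain z where z: "z \<in> {1..V-1}" "\<tau> z = y"
              using permutes_image[OF tp] by (metis imageE)
            have u: "ush p z \<in> {1..V}" "ush p z \<noteq> p" using ush_range[OF z(1) p] by auto
            have "sig_of p V \<tau> (ush p z) = y" using u z vshift_ush by (simp add: sig_of_def)
            then show ?thesis using u by (metis imageI)
          qed
        qed
      qed
    qed
  qed
qed

lemma tau_sig:
  assumes p: "p \<in> {1..V}" and tp: "\<tau> permutes {1..V-1}"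
  shows "tau_of p V (sig_of p V \<tau>) = \<tau>"
proof
  fix q
  show "tau_of p V (sig_of p V \<tau>) q = \<tau> q"
  proof (cases "q \<in> {1..V-1}")
    case True
    then show ?thesis using ush_range[OF True p] vshift_ush by (simp add: tau_of_def sig_of_def)
  next
    case False
    then show ?thesis using permutes_not_in[OF tp False] unfolding tau_of_def by auto
  qed
qed

lemma sig_tau:
  assumes p: "p \<in> {1..V}" and sp: "\<sigma> permutes {1..V}" and sv: "\<sigma> p = V"
  shows "sig_of p V (tau_of p V \<sigma>) = \<sigma>"
proof
  fix q
  show "sig_of p V (tau_of p V \<sigma>) q = \<sigma> q"
  proof (cases "q = p")
    case True then show ?thesis using sv by (simp add: sig_of_def)
  next
    case False
    show ?thesis
    proof (cases "q \<in> {1..V}")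
      case True
      then show ?thesis using vshift_range[OF True p False] ush_vshift[OF False] False
        by (simp add: tau_of_def sig_of_def)
    next
      case F2: False
      then show ?thesis using permutes_not_in[OF sp F2] False unfolding sig_of_def by auto
    qed
  qed
qed

lemma fiber_sum:
  assumes lg: "labeled_graph V E s" and p: "p \<in> {1..V}"
  shows "(\<Sum>\<sigma>\<in>{\<sigma>. \<sigma> permutes {1..V} \<and> \<sigma> p = V}.
           \<Prod>e\<in>{1..E}. sgn (int (\<sigma> (edge_tgt (s e))) - int (\<sigma> (edge_src (s e)))))
       = (-1) ^ out_deg E s p * c_graph (V - 1) (del_E E s p) (del_s E s p)"
proof -
  have "(\<Sum>\<sigma>\<in>{\<sigma>. \<sigma> permutes {1..V} \<and> \<sigma> p = V}.
           \<Prod>e\<in>{1..E}. sgn (int (\<sigma> (edge_tgt (s e))) - int (\<sigma> (edge_src (s e)))))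
     = (\<Sum>\<tau>\<in>{\<tau>. \<tau> permutes {1..V-1}}. (-1) ^ out_deg E s p * (\<Prod>k\<in>{1..del_E E s p}.
       sgn (int (\<tau> (edge_tgt (del_s E s p k))) - int (\<tau> (edge_src (del_s E s p k))))))"
  proof (rule sum.reindex_bij_witness[where i = "sig_of p V" and j = "tau_of p V"])
    fix \<sigma> assume "\<sigma> \<in> {\<sigma>. \<sigma> permutes {1..V} \<and> \<sigma> p = V}"
    then have sp: "\<sigma> permutes {1..V}" and sv: "\<sigma> p = V" by auto
    show "sig_of p V (tau_of p V \<sigma>) = \<sigma>" using sig_tau[OF p sp sv] .
    show "tau_of p V \<sigma> \<in> {\<tau>. \<tau> permutes {1..V-1}}" using tau_perm[OF p sp sv] by simp
    show "(-1) ^ out_deg E s p * (\<Prod>k\<in>{1..del_E E s p}.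
       sgn (int (tau_of p V \<sigma> (edge_tgt (del_s E s p k))) - int (tau_of p V \<sigma> (edge_src (del_s E s p k)))))
      = (\<Prod>e\<in>{1..E}. sgn (int (\<sigma> (edge_tgt (s e))) - int (\<sigma> (edge_src (s e)))))"
      using prod_split[OF lg p sp sv] by simp
  next
    fix \<tau> assume "\<tau> \<in> {\<tau>. \<tau> permutes {1..V-1}}"
    then have tp: "\<tau> permutes {1..V-1}" by simp
    show "tau_of p V (sig_of p V \<tau>) = \<tau>" using tau_sig[OF p tp] .
    show "sig_of p V \<tau> \<in> {\<sigma>. \<sigma> permutes {1..V} \<and> \<sigma> p = V}" using sig_perm[OF p tp] by simp
  qed
  also have "\<dots> = (-1) ^ out_deg E s p * c_graph (V - 1) (del_E E s p) (del_s E s p)"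
    by (simp add: c_graph_def sum_distrib_left)
  finally show ?thesis .
qed

theorem mainTheorem10:
  fixes V E :: nat and s :: "nat \<Rightarrow> nat set"
  assumes "labeled_graph V E s" and "V \<ge> 1"
  shows "c_graph V E s =
    (\<Sum>p\<in>{1..V}. (-1) ^ out_deg E s p * c_graph (V - 1) (del_E E s p) (del_s E s p))"
proof -
  let ?P = "{\<sigma>. \<sigma> permutes {1..V}}"
  let ?F = "\<lambda>\<sigma>. \<Prod>e\<in>{1..E}. sgn (int (\<sigma> (edge_tgt (s e))) - int (\<sigma> (edge_src (s e))))"
  have fin: "finite ?P" by (rule finite_permutations) simp
  have img: "(\<lambda>\<sigma>. inv \<sigma> V) ` ?P \<subseteq> {1..V}"
  proof
    fix x assume "x \<in> (\<lambda>\<sigma>. inv \<sigma> V) ` ?P"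
    then obtain \<sigma> where sp: "\<sigma> permutes {1..V}" and x: "x = inv \<sigma> V" by auto
    have "inv \<sigma> permutes {1..V}" using permutes_inv[OF sp] .
    then show "x \<in> {1..V}" using permutes_in_image[of "inv \<sigma>" "{1..V}" V] assms(2) x by simp
  qed
  have "c_graph V E s = sum ?F ?P" by (simp add: c_graph_def)
  also have "\<dots> = (\<Sum>p\<in>{1..V}. sum ?F {\<sigma>. \<sigma> \<in> ?P \<and> inv \<sigma> V = p})"
    using sum.group[OF fin _ img, of ?F] by simp
  also have "\<dots> = (\<Sum>p\<in>{1..V}. sum ?F {\<sigma>. \<sigma> permutes {1..V} \<and> \<sigma> p = V})"
  proof (rule sum.cong[OF refl])
    fix p
    have "{\<sigma>. \<sigma> \<in> ?P \<and> inv \<sigma> V = p} = {\<sigma>. \<sigma> permutes {1..V} \<and> \<sigma> p = V}"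
      by (auto dest: permutes_inv_eq)
    then show "sum ?F {\<sigma>. \<sigma> \<in> ?P \<and> inv \<sigma> V = p} = sum ?F {\<sigma>. \<sigma> permutes {1..V} \<and> \<sigma> p = V}"
      by simp
  qed
  also have "\<dots> = (\<Sum>p\<in>{1..V}. (-1) ^ out_deg E s p * c_graph (V - 1) (del_E E s p) (del_s E s p))"
    by (rule sum.cong[OF refl]) (rule fiber_sum[OF assms(1)])
  finally show ?thesis .
qed

end
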